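(* Let $(\mathcal G_A,p^A)$ and $(\mathcal G_B,p^B)$ be CPS's on the finite set $\Omega$ (satisfying the standing assumptions), each of which satisfies certainty reflection and is $1$-closed. Fix an event $E\subseteq\Omega$, a state $\omega\in\Omega$, and numbers $q_A,q_B\in[0,1]$. If $\omega\in C^\infty$ (i.e., it is common certainty at $\omega$ that Alice assigns probability $q_A$ to $E$ and Bob assigns probability $q_B$ to $E$) and local consistency holds at $\omega$, then $q_A=q_B$.
   Context: $\Omega$ is a finite set; every subset of $\Omega$ is an event. A conditional probability space (CPS) is a pair $(\mathcal G,p)$ where $\mathcal G$ is a family of nonempty subsets of $\Omega$ and $p$ assigns to each $G\in\mathcal G$ a probability measure $p_G$ on $\Omega$ such that (i) $p_G(G)=1$ for all $G\in\mathcal G$, and (ii) $p_G(E)=p_G(F)\,p_F(E)$ whenever $E\subseteq F\subseteq G$, $E\subseteq\Omega$, $F,G\in\mathcal G$. Standing assumption: every conditioning family $\mathcal G$ is closed under unions and under nonempty intersections (if $G,H\in\mathcal G$ then $G\cup H\in\mathcal G$, and $G\cap H\in\mathcal G$ whenever $G\cap H\neq\emptyset$) and covers $\Omega$ (every $\omega$ lies in some member). For a CPS $(\mathcal G_i,p^i)$ and $\omega\in\Omega$, the atom $m_i(\omega)=\bigcap\{G\in\mathcal G_i:\omega\in G\}$; it is nonempty and belongs to $\mathcal G_i$. The CPS $(\mathcal G_i,p^i)$ is $1$-closed if every $L\subseteq\Omega$ such that $L\subseteq G$ and $p^i_G(L)=1$ for some $G\in\mathcal G_i$ belongs to $\mathcal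 G_i$. It satisfies certainty reflection if for every event $E$, every $q\in[0,1]$ and every $\omega$: $p^i_{m_i(\omega)}(E)=q$ implies $p^i_{m_i(\omega)}(\{\omega'\in\Omega: p^i_{m_i(\omega')}(E)=q\})=1$. For agents $i=A,B$ and an event $F$, $C_i(F)=\{\omega: p^i_{m_i(\omega)}(F)=1\}$. Given $E$ and $q_A,q_B$, define $A^0=\{\omega:p^A_{m_A(\omega)}(E)=q_A\}$, $B^0=\{\omega:p^B_{m_B(\omega)}(E)=q_B\}$, $A^{n+1}=A^n\cap C_A(B^n)$, $B^{n+1}=B^n\cap C_B(A^n)$ for $n\ge0$, and $C^\infty=\bigcap_{n\ge0}A^n\cap\bigcap_{n\ge0}B^n$. Let $m(\omega)$ denote the intersection of all members of $\mathcal G_A\cap\mathcal G_B$ containing $\omega$ (note $\Omega\in\mathcal G_A\cap\mathcal G_B$). Local consistency holds at $\omega$ if $p^A_{m(\omega)}=p^B_{m(\omega)}$. *)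

theory Defs
  imports Complex_Main
begin

text \<open>The state space Omega is the (finite) universe of the type 'w. Events are sets of
  type 'w set. A probability measure on Omega is represented by its values on all events.\<close>

definition prob_measure :: "('w set \<Rightarrow> real) \<Rightarrow> bool" where
  "prob_measure P \<longleftrightarrow> (\<forall>E. P E \<ge> 0) \<and> P UNIV = 1 \<and>
     (\<forall>E F. E \<inter> F = {} \<longrightarrow> P (E \<union> F) = P E + P F)"

definition cps :: "'w set set \<Rightarrow> ('w set \<Rightarrow> 'w set \<Rightarrow> real) \<Rightarrow> bool" where
  "cps G p \<longleftrightarrow> (\<forall>H\<in>G. H \<noteq> {}) \<and> (\<forall>H\<in>G. prob_measure (p H)) \<and>
     (\<forall>H\<in>G. p H H = 1) \<and>
     (\<forall>E F H. E \<subseteq> F \<longrightarrow> F \<subseteq> H \<longrightarrow> F \<in> G \<longrightarrow> H \<in> G \<longrightarrow> p H E = p H F * p F E)"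

definition standing :: "'w set set \<Rightarrow> bool" where
  "standing G \<longleftrightarrow> (\<forall>H\<in>G. \<forall>K\<in>G. H \<union> K \<in> G) \<and>
     (\<forall>H\<in>G. \<forall>K\<in>G. H \<inter> K \<noteq> {} \<longrightarrow> H \<inter> K \<in> G) \<and> (\<forall>w. \<exists>H\<in>G. w \<in> H)"

definition atom :: "'w set set \<Rightarrow> 'w \<Rightarrow> 'w set" where
  "atom G w = \<Inter>{H \<in> G. w \<in> H}"

definition one_closed :: "'w set set \<Rightarrow> ('w set \<Rightarrow> 'w set \<Rightarrow> real) \<Rightarrow> bool" where
  "one_closed G p \<longleftrightarrow> (\<forall>L H. H \<in> G \<longrightarrow> L \<subseteq> H \<longrightarrow> p H L = 1 \<longrightarrow> L \<in> G)"

definition certainty_reflection :: "'w set set \<Rightarrow> ('w set \<Rightarrow> 'w set \<Rightarrow> real) \<Rightarrow> bool" where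
  "certainty_reflection G p \<longleftrightarrow>
     (\<forall>E (q::real) w. p (atom G w) E = q \<longrightarrow>
        p (atom G w) {w'. p (atom G w') E = q} = 1)"

definition certain :: "'w set set \<Rightarrow> ('w set \<Rightarrow> 'w set \<Rightarrow> real) \<Rightarrow> 'w set \<Rightarrow> 'w set" where
  "certain G p F = {w. p (atom G w) F = 1}"

primrec AB_seq :: "'w set set \<Rightarrow> ('w set \<Rightarrow> 'w set \<Rightarrow> real) \<Rightarrow>
    'w set set \<Rightarrow> ('w set \<Rightarrow> 'w set \<Rightarrow> real) \<Rightarrow> 'w set \<Rightarrow> real \<Rightarrow> real \<Rightarrow> nat \<Rightarrow> 'w set \<times> 'w set" where
  "AB_seq GA pA GB pB E qA qB 0 =
     ({w. pA (atom GA w) E = qA}, {w. pB (atom GB w) E = qB})"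
| "AB_seq GA pA GB pB E qA qB (Suc n) =
     (let (A, B) = AB_seq GA pA GB pB E qA qB n
      in (A \<inter> certain GA pA B, B \<inter> certain GB pB A))"

definition C_inf :: "'w set set \<Rightarrow> ('w set \<Rightarrow> 'w set \<Rightarrow> real) \<Rightarrow>
    'w set set \<Rightarrow> ('w set \<Rightarrow> 'w set \<Rightarrow> real) \<Rightarrow> 'w set \<Rightarrow> real \<Rightarrow> real \<Rightarrow> 'w set" where
  "C_inf GA pA GB pB E qA qB =
     (\<Inter>n. fst (AB_seq GA pA GB pB E qA qB n)) \<inter> (\<Inter>n. snd (AB_seq GA pA GB pB E qA qB n))"

end

theory Submission
  imports Defs
begin

lemma pm_props:
  assumes "prob_measure P"
  shows "P {} = 0" and "\<And>A. P A \<ge> 0" and "P UNIV = 1"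
    and "\<And>A B. A \<inter> B = {} \<Longrightarrow> P (A \<union> B) = P A + P B"
  using assms unfolding prob_measure_def
  by (metis Un_empty inf_bot_left add_cancel_left_right)+

lemma pm_split:
  assumes "prob_measure P"
  shows "P A = P (A \<inter> B) + P (A - B)"
proof -
  have "A = (A \<inter> B) \<union> (A - B)" by blast
  moreover have "(A \<inter> B) \<inter> (A - B) = {}" by blast
  ultimately show ?thesis using pm_props(4)[OF assms] by metis
qed

lemma pm_mono:
  assumes "prob_measure P" "A \<subseteq> B"
  shows "P A \<le> P B"
proof -
  have "P B = P (B \<inter> A) + P (B - A)" by (rule pm_split[OF assms(1)])
  moreover have "B \<inter> A = A" using assms(2) by blast
  ultimately show ?thesis using pm_props(2)[OF assms(1), of "B - A"] by simp
qed

lemma pm_le1: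
  assumes "prob_measure P"
  shows "P A \<le> 1"
  using pm_mono[OF assms, of A UNIV] pm_props(3)[OF assms] by simp

lemma pm_incl_excl:
  assumes "prob_measure P"
  shows "P (A \<union> B) = P A + P B - P (A \<inter> B)"
proof -
  have "P (A \<union> B) = P ((A \<union> B) \<inter> A) + P ((A \<union> B) - A)" by (rule pm_split[OF assms])
  moreover have "P B = P (B \<inter> A) + P (B - A)" by (rule pm_split[OF assms])
  moreover have "(A \<union> B) \<inter> A = A" "(A \<union> B) - A = B - A" "B \<inter> A = A \<inter> B" by blast+
  ultimately show ?thesis by simp
qed

lemma pm_restrict:
  assumes "prob_measure P" "P H = 1"
  shows "P E = P (E \<inter> H)"
proof -
  have "P UNIV = P (UNIV \<inter> H) + P (UNIV - H)" by (rule pm_split[OF assms(1)])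
  hence "P (- H) = 0" using assms pm_props(3)[OF assms(1)] by (simp add: Compl_eq_Diff_UNIV)
  moreover have "P (E - H) \<le> P (- H)" by (rule pm_mono[OF assms(1)]) blast
  moreover have "P (E - H) \<ge> 0" using pm_props(2)[OF assms(1)] by simp
  ultimately show ?thesis using pm_split[OF assms(1), of E H] by simp
qed

lemma pm_inter1:
  assumes "prob_measure P" "P A = 1" "P B = 1"
  shows "P (A \<inter> B) = 1"
  using pm_incl_excl[OF assms(1), of A B] pm_le1[OF assms(1), of "A \<union> B"]
    pm_le1[OF assms(1), of "A \<inter> B"] assms by simp

lemma pm_Inter1:
  assumes "prob_measure P" "finite F" "\<forall>X\<in>F. P X = 1"
  shows "P (\<Inter>F) = 1"
  using assms(2,3)
proof (induction F rule: finite_induct)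
  case empty
  then show ?case using pm_props(3)[OF assms(1)] by simp
next
  case (insert x F)
  then show ?case using pm_inter1[OF assms(1)] by simp
qed

lemma standingD:
  assumes "standing G"
  shows "\<And>H K. H \<in> G \<Longrightarrow> K \<in> G \<Longrightarrow> H \<union> K \<in> G"
    and "\<And>H K. H \<in> G \<Longrightarrow> K \<in> G \<Longrightarrow> H \<inter> K \<noteq> {} \<Longrightarrow> H \<inter> K \<in> G"
    and "\<And>w. \<exists>H\<in>G. w \<in> H"
  using assms unfolding standing_def by auto

lemma standing_Union:
  assumes "standing G" "finite F" "F \<noteq> {}" "F \<subseteq> G"
  shows "\<Union>F \<in> G"
  using assms(2,3,4)
proof (induction F rule: finite_ne_induct)
  case (singleton x)
  then show ?case by simp
next
  case (insert x F)
  then show ?case using standingD(1)[OF assms(1)] by simp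
qed

lemma standing_Inter:
  assumes "standing G" "finite F" "F \<noteq> {}" "F \<subseteq> G" "\<Inter>F \<noteq> {}"
  shows "\<Inter>F \<in> G"
  using assms(2,3,4,5)
proof (induction F rule: finite_ne_induct)
  case (singleton x)
  then show ?case by simp
next
  case (insert x F)
  then have "\<Inter>F \<noteq> {}" by blast
  with insert have "\<Inter>F \<in> G" by simp
  then show ?case using standingD(2)[OF assms(1)] insert by simp
qed

lemma atom_props:
  fixes G :: "('w::finite) set set"
  assumes "standing G"
  shows "atom G x \<in> G" "x \<in> atom G x" "\<And>H. H \<in> G \<Longrightarrow> x \<in> H \<Longrightarrow> atom G x \<subseteq> H"
proof -
  obtain H0 where "H0 \<in> G" "x \<in> H0" using standingD(3)[OF assms] by blast
  have "x \<in> atom G x" unfolding atom_def by blast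
  moreover have "atom G x \<in> G" unfolding atom_def
    apply (rule standing_Inter[OF assms])
    using \<open>H0 \<in> G\<close> \<open>x \<in> H0\<close> by auto
  ultimately show "atom G x \<in> G" "x \<in> atom G x" by auto
  show "\<And>H. H \<in> G \<Longrightarrow> x \<in> H \<Longrightarrow> atom G x \<subseteq> H" unfolding atom_def by blast
qed

lemma standing_UNIV:
  fixes G :: "('w::finite) set set"
  assumes "standing G"
  shows "UNIV \<in> G"
proof -
  have ne: "G \<noteq> {}" using standingD(3)[OF assms] by blast
  have "\<Union>G \<in> G" by (rule standing_Union[OF assms finite ne subset_refl])
  moreover have "\<Union>G = UNIV" using standingD(3)[OF assms] by blast
  ultimately show ?thesis by simp
qed

lemma standing_Int:
  fixes G1 G2 :: "('w::finite) set set"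
  assumes "standing G1" "standing G2"
  shows "standing (G1 \<inter> G2)"
proof -
  have u: "\<forall>H\<in>G1 \<inter> G2. \<forall>K\<in>G1 \<inter> G2. H \<union> K \<in> G1 \<inter> G2"
    using standingD(1)[OF assms(1)] standingD(1)[OF assms(2)] by simp
  have i: "\<forall>H\<in>G1 \<inter> G2. \<forall>K\<in>G1 \<inter> G2. H \<inter> K \<noteq> {} \<longrightarrow> H \<inter> K \<in> G1 \<inter> G2"
    using standingD(2)[OF assms(1)] standingD(2)[OF assms(2)] by simp
  have c: "\<forall>w. \<exists>H\<in>G1 \<inter> G2. w \<in> H"
    using standing_UNIV[OF assms(1)] standing_UNIV[OF assms(2)] by blast
  show ?thesis unfolding standing_def by (intro conjI u i c)
qed

lemma cpsD:
  assumes "cps G p"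
  shows "\<And>H. H \<in> G \<Longrightarrow> H \<noteq> {}"
    and "\<And>H. H \<in> G \<Longrightarrow> prob_measure (p H)"
    and "\<And>H. H \<in> G \<Longrightarrow> p H H = 1"
    and "\<And>E F H. E \<subseteq> F \<Longrightarrow> F \<subseteq> H \<Longrightarrow> F \<in> G \<Longrightarrow> H \<in> G \<Longrightarrow> p H E = p H F * p F E"
proof -
  have d: "(\<forall>H\<in>G. H \<noteq> {}) \<and> (\<forall>H\<in>G. prob_measure (p H)) \<and> (\<forall>H\<in>G. p H H = 1) \<and>
     (\<forall>E F H. E \<subseteq> F \<longrightarrow> F \<subseteq> H \<longrightarrow> F \<in> G \<longrightarrow> H \<in> G \<longrightarrow> p H E = p H F * p F E)"
    using assms unfolding cps_def .
  show "\<And>H. H \<in> G \<Longrightarrow> H \<noteq> {}" using d by (elim conjE) (rule bspec)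
  show "\<And>H. H \<in> G \<Longrightarrow> prob_measure (p H)" using d by (elim conjE) (rule bspec)
  show "\<And>H. H \<in> G \<Longrightarrow> p H H = 1" using d by (elim conjE) (rule bspec)
  show "\<And>E F H. E \<subseteq> F \<Longrightarrow> F \<subseteq> H \<Longrightarrow> F \<in> G \<Longrightarrow> H \<in> G \<Longrightarrow> p H E = p H F * p F E"
    using d[THEN conjunct2, THEN conjunct2, THEN conjunct2] by blast
qed

lemma union_avg:
  assumes cps: "cps G p" and K: "K \<in> G" and L: "L \<in> G" and KL: "K \<union> L \<in> G"
    and pK: "p K E = q" and pL: "p L E = q"
    and I: "K \<inter> L = {} \<or> (K \<inter> L \<in> G \<and> p (K \<inter> L) E = q)"
  shows "p (K \<union> L) E = q"
proof -
  let ?P = "p (K \<union> L)"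
  have pm: "prob_measure ?P" using cpsD(2)[OF cps KL] .
  have one: "?P (K \<union> L) = 1" using cpsD(3)[OF cps KL] .
  have chain: "\<And>F X. F \<in> G \<Longrightarrow> F \<subseteq> K \<union> L \<Longrightarrow> p F F = 1 \<Longrightarrow> ?P (E \<inter> F) = ?P F * p F E"
  proof -
    fix F assume F: "F \<in> G" "F \<subseteq> K \<union> L" "p F F = 1"
    have "?P (E \<inter> F) = ?P F * p F (E \<inter> F)"
      using cpsD(4)[OF cps _ F(2) F(1) KL] by blast
    moreover have "p F E = p F (E \<inter> F)"
      using pm_restrict[OF cpsD(2)[OF cps F(1)] F(3)] by blast
    ultimately show "?P (E \<inter> F) = ?P F * p F E" by simp
  qed
  have cK: "?P (E \<inter> K) = ?P K * q" using chain[OF K _ cpsD(3)[OF cps K]] pK by blast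
  have cL: "?P (E \<inter> L) = ?P L * q" using chain[OF L _ cpsD(3)[OF cps L]] pL by blast
  have cI: "?P (E \<inter> (K \<inter> L)) = ?P (K \<inter> L) * q"
  proof (cases "K \<inter> L = {}")
    case True then show ?thesis using pm_props(1)[OF pm] by simp
  next
    case False
    then have "K \<inter> L \<in> G" "p (K \<inter> L) E = q" using I by auto
    then show ?thesis using chain[of "K \<inter> L"] cpsD(3)[OF cps] by blast
  qed
  have "?P E = ?P (E \<inter> (K \<union> L))" by (rule pm_restrict[OF pm one])
  also have "E \<inter> (K \<union> L) = (E \<inter> K) \<union> (E \<inter> L)" by blast
  also have "?P ((E \<inter> K) \<union> (E \<inter> L)) = ?P (E \<inter> K) + ?P (E \<inter> L) - ?P ((E \<inter> K) \<inter> (E \<inter> L))"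
    by (rule pm_incl_excl[OF pm])
  also have "(E \<inter> K) \<inter> (E \<inter> L) = E \<inter> (K \<inter> L)" by blast
  finally have "?P E = q * (?P K + ?P L - ?P (K \<inter> L))" using cK cL cI by (simp add: algebra_simps)
  also have "?P K + ?P L - ?P (K \<inter> L) = 1" using pm_incl_excl[OF pm, of K L] one by simp
  finally show ?thesis by simp
qed

lemma avg_lemma:
  fixes G :: "('w::finite) set set"
  assumes cps: "cps G p" and st: "standing G"
  shows "H \<in> G \<Longrightarrow> (\<forall>x\<in>H. p (atom G x) E = q) \<Longrightarrow> p H E = q"
  using finite[of H]
proof (induction H rule: finite_psubset_induct)
  case (psubset H)
  show ?case
  proof (cases "\<exists>x\<in>H. atom G x = H")
    case True
    then show ?thesis using psubset.prems by auto
  next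
    case False
    have sub: "\<And>x. x \<in> H \<Longrightarrow> atom G x \<subset> H"
      using False atom_props(3)[OF st psubset.prems(1)] by blast
    have main: "\<And>X. finite X \<Longrightarrow> X \<noteq> {} \<Longrightarrow> X \<subseteq> H \<Longrightarrow>
        (\<Union>x\<in>X. atom G x) \<in> G \<and> p (\<Union>x\<in>X. atom G x) E = q"
    proof -
      fix X :: "'w set" assume "finite X" "X \<noteq> {}" "X \<subseteq> H"
      then show "(\<Union>x\<in>X. atom G x) \<in> G \<and> p (\<Union>x\<in>X. atom G x) E = q"
      proof (induction X rule: finite_ne_induct)
        case (singleton x)
        then show ?case using atom_props(1)[OF st] psubset.prems(2) by auto
      next
        case (insert x X)
        let ?U = "\<Union>x\<in>X. atom G x"
        have U: "?U \<in> G" "p ?U E = q" using insert by auto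
        have ax: "atom G x \<in> G" "p (atom G x) E = q"
          using atom_props(1)[OF st] psubset.prems(2) insert by auto
        have un: "atom G x \<union> ?U \<in> G" using standingD(1)[OF st] U ax by blast
        have I: "atom G x \<inter> ?U = {} \<or> (atom G x \<inter> ?U \<in> G \<and> p (atom G x \<inter> ?U) E = q)"
        proof (cases "atom G x \<inter> ?U = {}")
          case False
          have inG: "atom G x \<inter> ?U \<in> G" using standingD(2)[OF st] U ax False by blast
          have ps: "atom G x \<inter> ?U \<subset> H" using sub[of x] insert by blast
          have "\<forall>y\<in>atom G x \<inter> ?U. p (atom G y) E = q"
            using ps psubset.prems(2) by blast
          then have "p (atom G x \<inter> ?U) E = q" using psubset.IH[OF ps inG] by blast
          then show ?thesis using inG by blast
        qed simp
        have "p (atom G x \<union> ?U) E = q" by (rule union_avg[OF cps ax(1) U(1) un ax(2) U(2) I])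
        then show ?case using un by simp
      qed
    qed
    have "(\<Union>x\<in>H. atom G x) = H"
      using atom_props(2,3)[OF st] psubset.prems(1) by blast
    moreover have "H \<noteq> {}" using cpsD(1)[OF cps psubset.prems(1)] .
    ultimately show ?thesis using main[of H] by simp
  qed
qed


lemma seq_step:
  "fst (AB_seq GA pA GB pB E qA qB (Suc n)) =
     fst (AB_seq GA pA GB pB E qA qB n) \<inter> certain GA pA (snd (AB_seq GA pA GB pB E qA qB n))"
  "snd (AB_seq GA pA GB pB E qA qB (Suc n)) =
     snd (AB_seq GA pA GB pB E qA qB n) \<inter> certain GB pB (fst (AB_seq GA pA GB pB E qA qB n))"
  by (simp_all add: case_prod_beta Let_def)

lemma seq_A_refl:
  fixes GA :: "('w::finite) set set"
  assumes "cps GA pA" "standing GA" "certainty_reflection GA pA"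
  shows "x \<in> fst (AB_seq GA pA GB pB E qA qB n) \<Longrightarrow> pA (atom GA x) (fst (AB_seq GA pA GB pB E qA qB n)) = 1"
proof (induction n arbitrary: x)
  case 0
  then have "pA (atom GA x) E = qA" by simp
  then show ?case using assms(3)[unfolded certainty_reflection_def, rule_format, where E=E and q=qA and w=x] by simp
next
  case (Suc n)
  have pm: "prob_measure (pA (atom GA x))"
    using cpsD(2)[OF assms(1) atom_props(1)[OF assms(2)]] .
  have x: "x \<in> fst (AB_seq GA pA GB pB E qA qB n)"
    "pA (atom GA x) (snd (AB_seq GA pA GB pB E qA qB n)) = 1"
    using Suc.prems unfolding seq_step certain_def by auto
  have "pA (atom GA x) (certain GA pA (snd (AB_seq GA pA GB pB E qA qB n))) = 1"
    using assms(3) x(2) unfolding certainty_reflection_def certain_def by blast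
  then show ?case unfolding seq_step using pm_inter1[OF pm] Suc.IH[OF x(1)] by simp
qed

lemma seq_B_refl:
  fixes GB :: "('w::finite) set set"
  assumes "cps GB pB" "standing GB" "certainty_reflection GB pB"
  shows "x \<in> snd (AB_seq GA pA GB pB E qA qB n) \<Longrightarrow> pB (atom GB x) (snd (AB_seq GA pA GB pB E qA qB n)) = 1"
proof (induction n arbitrary: x)
  case 0
  then have "pB (atom GB x) E = qB" by simp
  then show ?case using assms(3)[unfolded certainty_reflection_def, rule_format, where E=E and q=qB and w=x] by simp
next
  case (Suc n)
  have pm: "prob_measure (pB (atom GB x))"
    using cpsD(2)[OF assms(1) atom_props(1)[OF assms(2)]] .
  have x: "x \<in> snd (AB_seq GA pA GB pB E qA qB n)"
    "pB (atom GB x) (fst (AB_seq GA pA GB pB E qA qB n)) = 1"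
    using Suc.prems unfolding seq_step certain_def by auto
  have "pB (atom GB x) (certain GB pB (fst (AB_seq GA pA GB pB E qA qB n))) = 1"
    using assms(3) x(2) unfolding certainty_reflection_def certain_def by blast
  then show ?case unfolding seq_step using pm_inter1[OF pm] Suc.IH[OF x(1)] by simp
qed

lemma Cinf_in_G:
  fixes G :: "('w::finite) set set"
  assumes cps: "cps G p" and st: "standing G" and oc: "one_closed G p"
    and C: "C \<noteq> {}" and cert: "\<And>x. x \<in> C \<Longrightarrow> p (atom G x) C = 1"
  shows "C \<in> G"
proof -
  have sub: "atom G x \<subseteq> C" if x: "x \<in> C" for x
  proof -
    have pm: "prob_measure (p (atom G x))" and one: "p (atom G x) (atom G x) = 1"
      using cpsD(2,3)[OF cps atom_props(1)[OF st]] by auto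
    have "p (atom G x) (C \<inter> atom G x) = 1" using pm_inter1[OF pm cert[OF x] one] .
    then have "C \<inter> atom G x \<in> G" using oc atom_props(1)[OF st] unfolding one_closed_def by blast
    moreover have "x \<in> C \<inter> atom G x" using x atom_props(2)[OF st] by blast
    ultimately show ?thesis using atom_props(3)[OF st] by blast
  qed
  have "(\<Union>x\<in>C. atom G x) \<in> G"
    apply (rule standing_Union[OF st]) using C atom_props(1)[OF st] by auto
  moreover have "(\<Union>x\<in>C. atom G x) = C" using sub atom_props(2)[OF st] by blast
  ultimately show ?thesis by simp
qed

theorem theorem1:
  fixes GA GB :: "('w::finite) set set"
    and pA pB :: "'w set \<Rightarrow> 'w set \<Rightarrow> real"
    and E :: "'w set" and w :: 'w and qA qB :: real
  assumes "cps GA pA" and "standing GA" and "certainty_reflection GA pA" and "one_closed GA pA"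
    and "cps GB pB" and "standing GB" and "certainty_reflection GB pB" and "one_closed GB pB"
    and "0 \<le> qA" and "qA \<le> 1" and "0 \<le> qB" and "qB \<le> 1"
    and "w \<in> C_inf GA pA GB pB E qA qB"
    and "pA (atom (GA \<inter> GB) w) = pB (atom (GA \<inter> GB) w)"
  shows "qA = qB"
proof -
  define As where "As = (\<lambda>n. fst (AB_seq GA pA GB pB E qA qB n))"
  define Bs where "Bs = (\<lambda>n. snd (AB_seq GA pA GB pB E qA qB n))"
  define C where "C = C_inf GA pA GB pB E qA qB"
  have Ceq: "C = \<Inter>(range As \<union> range Bs)" unfolding C_def C_inf_def As_def Bs_def
    by (simp only: Inter_Un_distrib)
  have fin: "finite (range As \<union> range Bs)" by (rule finite)
  have certA: "pA (atom GA x) C = 1" if x: "x \<in> C" for x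
  proof -
    have pm: "prob_measure (pA (atom GA x))"
      using cpsD(2)[OF assms(1) atom_props(1)[OF assms(2)]] .
    have xs: "x \<in> As n" "x \<in> Bs n" for n using x unfolding C_def C_inf_def As_def Bs_def by blast+
    have "pA (atom GA x) (As n) = 1" for n
      using seq_A_refl[OF assms(1-3), of x GB pB E qA qB n] xs(1)[of n] unfolding As_def by blast
    moreover have "pA (atom GA x) (Bs n) = 1" for n
      using xs(1)[of "Suc n"] unfolding As_def Bs_def seq_step certain_def by auto
    ultimately have "\<forall>X\<in>range As \<union> range Bs. pA (atom GA x) X = 1" by blast
    then show ?thesis unfolding Ceq by (rule pm_Inter1[OF pm fin])
  qed
  have certB: "pB (atom GB x) C = 1" if x: "x \<in> C" for x
  proof -
    have pm: "prob_measure (pB (atom GB x))"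
      using cpsD(2)[OF assms(5) atom_props(1)[OF assms(6)]] .
    have xs: "x \<in> As n" "x \<in> Bs n" for n using x unfolding C_def C_inf_def As_def Bs_def by blast+
    have "pB (atom GB x) (Bs n) = 1" for n
      using seq_B_refl[OF assms(5-7), of x GA pA E qA qB n] xs(2)[of n] unfolding Bs_def by blast
    moreover have "pB (atom GB x) (As n) = 1" for n
      using xs(2)[of "Suc n"] unfolding As_def Bs_def seq_step certain_def by auto
    ultimately have "\<forall>X\<in>range As \<union> range Bs. pB (atom GB x) X = 1" by blast
    then show ?thesis unfolding Ceq by (rule pm_Inter1[OF pm fin])
  qed
  have wC: "w \<in> C" using assms(13) C_def by simp
  have CA: "C \<in> GA" using Cinf_in_G[OF assms(1,2,4)] certA wC by blast
  have CB: "C \<in> GB" using Cinf_in_G[OF assms(5,6,8)] certB wC by blast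
  have stI: "standing (GA \<inter> GB)" using standing_Int[OF assms(2,6)] .
  let ?M = "atom (GA \<inter> GB) w"
  have M: "?M \<in> GA" "?M \<in> GB" "?M \<subseteq> C"
    using atom_props(1,3)[OF stI] CA CB wC by auto
  have C0: "C \<subseteq> As 0" "C \<subseteq> Bs 0" unfolding C_def C_inf_def As_def Bs_def by blast+
  have "pA ?M E = qA"
    apply (rule avg_lemma[OF assms(1,2) M(1)])
    using M(3) C0(1) unfolding As_def by auto
  moreover have "pB ?M E = qB"
    apply (rule avg_lemma[OF assms(5,6) M(2)])
    using M(3) C0(2) unfolding Bs_def by auto
  ultimately show ?thesis using assms(14) by simp
qed

end
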